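(* Let $X$ be a finite set and let $\mathcal{P}=\{X_1,\ldots,X_m\}$ be an $(m,k)$-partition of $X$ such that, for each $i\in\{1,\ldots,k\}$, $\mathcal{P}$ has exactly $m_i\ge1$ blocks of size $n_i\ge1$. Let $A$ be the set of all $k$-tuples $(t_1,\ldots,t_k)$, where each $t_i=(l_{i,1},\ldots,l_{i,m_i})$ is a sequence of length $m_i$ with entries in $\{n_1,\ldots,n_k\}$, such that the multiset of all entries of $t_1,\ldots,t_k$ together is the multiset containing $n_j$ with multiplicity exactly $m_j$ for each $j\in\{1,\ldots,k\}$. For $(t_1,\ldots,t_k)\in A$ let $s_i=l_{i,1}+\cdots+l_{i,m_i}$ be the sum of the entries of $t_i$. Then \[|\Sigma(X,\mathcal{P})|=m_1!\,m_2!\cdots m_k!\sum_{(t_1,\ldots,t_k)\in A} n_1^{\,s_1}n_2^{\,s_2}\cdots n_k^{\,s_k}.\]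
   Context: An $(m,k)$-partition is a partition with exactly $m$ blocks having exactly $k$ distinct block sizes (here $n_1,\ldots,n_k$ are the distinct block sizes). $T(X,\mathcal{P})$ is the semigroup of all maps $f\colon X\to X$ such that every block of $\mathcal{P}$ is mapped by $f$ into some block of $\mathcal{P}$, and $\Sigma(X,\mathcal{P})=\{f\in T(X,\mathcal{P})\mid Xf\cap B\neq\emptyset\text{ for every block } B \text{ of } \mathcal{P}\}$. *)

theory Defs
  imports Main "HOL-Library.FuncSet" "HOL-Library.Disjoint_Sets" "HOL-Library.Multiset"
begin

text \<open>Maps X -> X are represented as extensional functions (value undefined outside X),
so that distinct maps correspond to distinct HOL functions.\<close>

definition T_part :: "'a set \<Rightarrow> 'a set set \<Rightarrow> ('a \<Rightarrow> 'a) set" where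
  "T_part X P = {f \<in> X \<rightarrow>\<^sub>E X. \<forall>B\<in>P. \<exists>C\<in>P. f ` B \<subseteq> C}"

definition Sigma_part :: "'a set \<Rightarrow> 'a set set \<Rightarrow> ('a \<Rightarrow> 'a) set" where
  "Sigma_part X P = {f \<in> T_part X P. \<forall>B\<in>P. f ` X \<inter> B \<noteq> {}}"

definition tuple_set :: "nat \<Rightarrow> (nat \<Rightarrow> nat) \<Rightarrow> (nat \<Rightarrow> nat) \<Rightarrow> (nat \<Rightarrow> nat list) set" where
  "tuple_set k n m = {t. (\<forall>i\<in>{1..k}. length (t i) = m i \<and> set (t i) \<subseteq> n ` {1..k})
      \<and> (\<forall>i. i \<notin> {1..k} \<longrightarrow> t i = [])
      \<and> (\<Sum>i\<in>{1..k}. mset (t i)) = (\<Sum>j\<in>{1..k}. replicate_mset (m j) (n j))}"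

end

theory Submission
  imports Defs "HOL-Combinatorics.Permutations"
begin

lemma bij_count2:
  assumes S: "finite S" and T: "finite T" and c: "card S = card T"
  shows "card {f \<in> S \<rightarrow>\<^sub>E T. bij_betw f S T} = fact (card S)"
proof -
  obtain h where h: "bij_betw h T S" using finite_same_card_bij[OF T S] c by metis
  let ?F = "{f \<in> S \<rightarrow>\<^sub>E T. bij_betw f S T}"
  let ?Q = "{p. p permutes S}"
  define \<Phi> where "\<Phi> f = (\<lambda>x. if x \<in> S then h (f x) else x)" for f
  define \<Psi> where "\<Psi> p = restrict (\<lambda>x. inv_into T h (p x)) S" for p
  have "bij_betw \<Phi> ?F ?Q"
  proof (rule bij_betw_byWitness[where f'=\<Psi>])
    show "\<forall>f\<in>?F. \<Psi> (\<Phi> f) = f"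
    proof
      fix f assume f: "f \<in> ?F"
      show "\<Psi> (\<Phi> f) = f"
      proof
        fix x show "\<Psi> (\<Phi> f) x = f x"
        proof (cases "x \<in> S")
          case True
          then have "f x \<in> T" using f by auto
          then show ?thesis using True h unfolding \<Psi>_def \<Phi>_def
            by (simp add: bij_betw_def inv_into_f_f)
        next
          case False
          then show ?thesis using f unfolding \<Psi>_def by (auto simp: PiE_def extensional_def)
        qed
      qed
    qed
    show "\<forall>p\<in>?Q. \<Phi> (\<Psi> p) = p"
    proof
      fix p assume p: "p \<in> ?Q"
      show "\<Phi> (\<Psi> p) = p"
      proof
        fix x show "\<Phi> (\<Psi> p) x = p x"
        proof (cases "x \<in> S")
          case True
          then have "p x \<in> S" using p by (simp add: permutes_in_image)
          then show ?thesis using True h unfolding \<Psi>_def \<Phi>_def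
            by (simp add: bij_betw_def f_inv_into_f)
        next
          case False
          then show ?thesis using p unfolding \<Phi>_def by (simp add: permutes_not_in)
        qed
      qed
    qed
    show "\<Phi> ` ?F \<subseteq> ?Q"
    proof
      fix p assume "p \<in> \<Phi> ` ?F"
      then obtain f where f: "f \<in> ?F" and pf: "p = \<Phi> f" by auto
      have "bij_betw (h \<circ> f) S S" using f h bij_betw_trans by auto
      then have "bij_betw p S S"
        by (rule bij_betw_cong[THEN iffD1, rotated]) (simp add: pf \<Phi>_def)
      moreover have "\<forall>x. x \<notin> S \<longrightarrow> p x = x" by (simp add: pf \<Phi>_def)
      ultimately show "p \<in> ?Q" by (simp add: bij_imp_permutes)
    qed
    show "\<Psi> ` ?Q \<subseteq> ?F"
    proof
      fix f assume "f \<in> \<Psi> ` ?Q"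
      then obtain p where p: "p permutes S" and fp: "f = \<Psi> p" by auto
      have "bij_betw p S S" using p permutes_imp_bij by blast
      moreover have "bij_betw (inv_into T h) S T" using h bij_betw_inv_into by blast
      ultimately have "bij_betw (inv_into T h \<circ> p) S T" using bij_betw_trans by blast
      then have b: "bij_betw f S T"
        by (rule bij_betw_cong[THEN iffD1, rotated]) (simp add: fp \<Psi>_def)
      have "f \<in> S \<rightarrow>\<^sub>E T" using b unfolding fp \<Psi>_def bij_betw_def by auto
      then show "f \<in> ?F" using b by simp
    qed
  qed
  then have "card ?F = card ?Q" by (rule bij_betw_same_card)
  also have "\<dots> = fact (card S)" using card_permutations[OF refl S] .
  finally show ?thesis .
qed


lemma core_count:
  fixes A :: "'x set" and c d :: "'x \<Rightarrow> 'v"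
  assumes A: "finite A" and eq: "\<And>v. card {x\<in>A. c x = v} = card {x\<in>A. d x = v}"
  shows "card {\<pi> \<in> A \<rightarrow>\<^sub>E A. bij_betw \<pi> A A \<and> (\<forall>x\<in>A. d (\<pi> x) = c x)}
         = (\<Prod>v\<in>c ` A. fact (card {x\<in>A. c x = v}))"
proof -
  define C where "C v = {x\<in>A. c x = v}" for v
  define D where "D v = {x\<in>A. d x = v}" for v
  define V where "V = c ` A"
  let ?S = "{\<pi> \<in> A \<rightarrow>\<^sub>E A. bij_betw \<pi> A A \<and> (\<forall>x\<in>A. d (\<pi> x) = c x)}"
  let ?T = "PiE V (\<lambda>v. {g \<in> C v \<rightarrow>\<^sub>E D v. bij_betw g (C v) (D v)})"
  define \<Phi> where "\<Phi> \<pi> = (\<lambda>v\<in>V. restrict \<pi> (C v))" for \<pi> :: "'x \<Rightarrow> 'x"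
  define \<Psi> where "\<Psi> G = (\<lambda>x\<in>A. G (c x) x)" for G :: "'v \<Rightarrow> 'x \<Rightarrow> 'x"
  have "bij_betw \<Phi> ?S ?T"
  proof (rule bij_betw_byWitness[where f'=\<Psi>])
    show "\<forall>\<pi>\<in>?S. \<Psi> (\<Phi> \<pi>) = \<pi>"
    proof
      fix \<pi> assume p: "\<pi> \<in> ?S"
      show "\<Psi> (\<Phi> \<pi>) = \<pi>"
      proof
        fix x show "\<Psi> (\<Phi> \<pi>) x = \<pi> x"
          using p unfolding \<Psi>_def \<Phi>_def V_def C_def by (auto simp: PiE_def extensional_def)
      qed
    qed
    show "\<forall>G\<in>?T. \<Phi> (\<Psi> G) = G"
    proof
      fix G assume G: "G \<in> ?T"
      show "\<Phi> (\<Psi> G) = G"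
      proof
        fix v show "\<Phi> (\<Psi> G) v = G v"
        proof (cases "v \<in> V")
          case True
          then have "G v \<in> C v \<rightarrow>\<^sub>E D v" using G by auto
          then show ?thesis using True unfolding \<Phi>_def \<Psi>_def
            by (auto simp: C_def PiE_def extensional_def)
        next
          case False
          then show ?thesis using G unfolding \<Phi>_def by (auto simp: PiE_def extensional_def)
        qed
      qed
    qed
    show "\<Phi> ` ?S \<subseteq> ?T"
    proof
      fix G assume "G \<in> \<Phi> ` ?S"
      then obtain \<pi> where p: "\<pi> \<in> ?S" and G: "G = \<Phi> \<pi>" by auto
      have "restrict \<pi> (C v) \<in> C v \<rightarrow>\<^sub>E D v \<and> bij_betw (restrict \<pi> (C v)) (C v) (D v)" for v
      proof -
        have pA: "\<pi> ` A = A" "inj_on \<pi> A" "\<forall>x\<in>A. d (\<pi> x) = c x" using p by (auto simp: bij_betw_def)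
        have 1: "restrict \<pi> (C v) \<in> C v \<rightarrow>\<^sub>E D v" using pA by (auto simp: C_def D_def)
        have "bij_betw \<pi> (C v) (D v)"
          unfolding bij_betw_def
        proof
          show "inj_on \<pi> (C v)" using pA(2) by (rule inj_on_subset) (auto simp: C_def)
          show "\<pi> ` C v = D v"
          proof
            show "\<pi> ` C v \<subseteq> D v" using pA by (auto simp: C_def D_def)
            show "D v \<subseteq> \<pi> ` C v"
            proof
              fix y assume y: "y \<in> D v"
              then have "y \<in> \<pi> ` A" using pA by (auto simp: D_def)
              then obtain x where "x \<in> A" "y = \<pi> x" by auto
              then show "y \<in> \<pi> ` C v" using y pA by (auto simp: C_def D_def)
            qed
          qed
        qed
        then have "bij_betw (restrict \<pi> (C v)) (C v) (D v)"
          by (rule bij_betw_cong[THEN iffD1, rotated]) simp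
        with 1 show ?thesis by simp
      qed
      then show "G \<in> ?T" unfolding G \<Phi>_def by auto
    qed
    show "\<Psi> ` ?T \<subseteq> ?S"
    proof
      fix \<pi> assume "\<pi> \<in> \<Psi> ` ?T"
      then obtain G where G: "G \<in> ?T" and p: "\<pi> = \<Psi> G" by auto
      have Gv: "bij_betw (G v) (C v) (D v)" "G v \<in> C v \<rightarrow>\<^sub>E D v" if "v \<in> V" for v
        using G that by auto
      have px: "\<pi> x \<in> A \<and> d (\<pi> x) = c x" if "x \<in> A" for x
      proof -
        have "c x \<in> V" "x \<in> C (c x)" using that by (auto simp: V_def C_def)
        then have "G (c x) x \<in> D (c x)" using Gv by auto
        then show ?thesis using that by (simp add: p \<Psi>_def D_def)
      qed
      have inj: "inj_on \<pi> A"
      proof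
        fix x y assume xy: "x \<in> A" "y \<in> A" "\<pi> x = \<pi> y"
        then have "c x = c y" using px by metis
        moreover have "c x \<in> V" "x \<in> C (c x)" "y \<in> C (c x)" using xy \<open>c x = c y\<close>
          by (auto simp: V_def C_def)
        moreover have "G (c x) x = G (c y) y" using xy by (simp add: p \<Psi>_def)
        ultimately show "x = y" using Gv(1)[of "c x"] by (auto simp: bij_betw_def inj_on_def)
      qed
      have surj: "A \<subseteq> \<pi> ` A"
      proof
        fix y assume y: "y \<in> A"
        have "card (D (d y)) > 0" using y A by (auto simp: D_def card_gt_0_iff)
        then have "card (C (d y)) > 0" using eq by (simp add: C_def D_def)
        then obtain x where x: "x \<in> A" "c x = d y" by (auto simp: C_def card_gt_0_iff)
        then have v: "d y \<in> V" unfolding V_def by (metis image_eqI)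
        have "y \<in> D (d y)" using y by (simp add: D_def)
        then obtain z where z: "z \<in> C (d y)" "G (d y) z = y" using Gv(1)[OF v]
          unfolding bij_betw_def by (metis imageE)
        then have "\<pi> z = y" using z by (simp add: p \<Psi>_def C_def)
        then show "y \<in> \<pi> ` A" using z by (auto simp: C_def)
      qed
      have "\<pi> \<in> A \<rightarrow>\<^sub>E A" using px by (auto simp: p \<Psi>_def)
      moreover have "bij_betw \<pi> A A" using inj surj px by (auto simp: bij_betw_def)
      ultimately show "\<pi> \<in> ?S" using px by auto
    qed
  qed
  then have "card ?S = card ?T" by (rule bij_betw_same_card)
  also have "\<dots> = (\<Prod>v\<in>V. card {g \<in> C v \<rightarrow>\<^sub>E D v. bij_betw g (C v) (D v)})"
    by (rule card_PiE) (simp add: V_def A)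
  also have "\<dots> = (\<Prod>v\<in>V. fact (card (C v)))"
  proof (rule prod.cong[OF refl])
    fix v show "card {g \<in> C v \<rightarrow>\<^sub>E D v. bij_betw g (C v) (D v)} = fact (card (C v))"
      by (rule bij_count2) (use A eq in \<open>auto simp: C_def D_def\<close>)
  qed
  finally show ?thesis by (simp add: V_def C_def)
qed


lemma count_mset_map_upt:
  "count (mset (map h [0..<M])) v = card {a\<in>{..<M}. h a = v}"
proof -
  have "count (mset (map h [0..<M])) v = count (image_mset h (mset_set {..<M})) v"
    by (simp add: lessThan_atLeast0)
  also have "\<dots> = (\<Sum>y\<in>h -` {v} \<inter> {..<M}. 1)"
    by (simp add: count_image_mset)
  also have "\<dots> = card (h -` {v} \<inter> {..<M})" by simp
  also have "h -` {v} \<inter> {..<M} = {a\<in>{..<M}. h a = v}" by auto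
  finally show ?thesis .
qed

lemma count_sum_sigma:
  assumes "finite K"
  shows "count (\<Sum>i\<in>K. mset (map (\<lambda>a. g (i,a)) [0..<M i])) v
     = card {x \<in> Sigma K (\<lambda>i. {..<M i}). g x = v}"
proof -
  have "count (\<Sum>i\<in>K. mset (map (\<lambda>a. g (i,a)) [0..<M i])) v
      = (\<Sum>i\<in>K. card {a\<in>{..<M i}. g (i,a) = v})"
    by (simp only: count_sum count_mset_map_upt)
  also have "\<dots> = card (Sigma K (\<lambda>i. {a\<in>{..<M i}. g (i,a) = v}))"
    by (rule card_SigmaI[symmetric]) (use assms in auto)
  also have "Sigma K (\<lambda>i. {a\<in>{..<M i}. g (i,a) = v}) = {x \<in> Sigma K (\<lambda>i. {..<M i}). g x = v}"
    by auto
  finally show ?thesis .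
qed

lemma finite_tuple_set: "finite (tuple_set k n m)"
proof -
  let ?L = "\<lambda>i. {xs. set xs \<subseteq> n ` {1..k} \<and> length xs = m i}"
  let ?E = "\<lambda>g i. if i \<in> {1..k} then g i else ([]::nat list)"
  have "tuple_set k n m \<subseteq> ?E ` PiE {1..k} ?L"
  proof
    fix t assume t: "t \<in> tuple_set k n m"
    have "t = ?E (restrict t {1..k})" using t by (auto simp: tuple_set_def)
    moreover have "restrict t {1..k} \<in> PiE {1..k} ?L" using t by (auto simp: tuple_set_def)
    ultimately show "t \<in> ?E ` PiE {1..k} ?L" by blast
  qed
  moreover have "finite (PiE {1..k} ?L)"
    by (rule finite_PiE) (auto intro: finite_lists_length_eq)
  ultimately show ?thesis using finite_subset by blast
qed



theorem theorem6p3: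
  fixes X :: "'a set" and P :: "'a set set" and k :: nat and n m :: "nat \<Rightarrow> nat"
  assumes "finite X"
    and "partition_on X P"
    and "inj_on n {1..k}"
    and "\<forall>i\<in>{1..k}. n i \<ge> 1 \<and> m i \<ge> 1"
    and "card ` P = n ` {1..k}"
    and "\<forall>i\<in>{1..k}. card {B \<in> P. card B = n i} = m i"
  shows "card (Sigma_part X P) =
    (\<Prod>i\<in>{1..k}. fact (m i)) *
    (\<Sum>t\<in>tuple_set k n m. \<Prod>i\<in>{1..k}. n i ^ sum_list (t i))"
proof -
  note X = assms(1) and part = assms(2) and ninj = assms(3) and pos = assms(4)
    and cardP = assms(5) and cls = assms(6)
  define I where "I = Sigma {1..k} (\<lambda>i. {..<m i})"
  have finI: "finite I" by (simp add: I_def)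
  have "P \<subseteq> Pow X" using partition_onD1[OF part] by auto
  then have finP: "finite P" using X finite_subset by blast
  have "\<forall>i\<in>{1..k}. \<exists>h. bij_betw h {..<m i} {B \<in> P. card B = n i}"
    using cls finP by (intro ballI finite_same_card_bij) auto
  then obtain H where H: "\<And>i. i \<in> {1..k} \<Longrightarrow> bij_betw (H i) {..<m i} {B \<in> P. card B = n i}"
    by metis
  define e where "e x = H (fst x) (snd x)" for x
  have eP: "e x \<in> P \<and> card (e x) = n (fst x)" if "x \<in> I" for x
  proof -
    have "fst x \<in> {1..k}" "snd x < m (fst x)" using that by (auto simp: I_def)
    then have "H (fst x) (snd x) \<in> {B \<in> P. card B = n (fst x)}"
      using H[of "fst x"] unfolding bij_betw_def by blast
    then show ?thesis by (simp add: e_def)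
  qed
  have e_ne: "e x \<noteq> {}" if "x \<in> I" for x
  proof -
    have "e x \<in> P" using eP[OF that] by (rule conjunct1)
    then show ?thesis using partition_onD3[OF part] by metis
  qed
  have e_sub: "e x \<subseteq> X" if "x \<in> I" for x
  proof -
    have "e x \<in> P" using eP[OF that] by (rule conjunct1)
    then show ?thesis using partition_onD1[OF part] by (metis Union_upper)
  qed
  have e_inj: "x = y" if "x \<in> I" "y \<in> I" "e x = e y" for x y
  proof -
    have "n (fst x) = n (fst y)" using eP that by metis
    moreover have "fst x \<in> {1..k}" "fst y \<in> {1..k}" using that by (auto simp: I_def)
    ultimately have f: "fst x = fst y" using ninj by (meson inj_onD)
    have "snd x \<in> {..<m (fst x)}" "snd y \<in> {..<m (fst x)}" using that f by (auto simp: I_def)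
    moreover have "H (fst x) (snd x) = H (fst x) (snd y)" using that(3) f by (simp add: e_def)
    moreover have "inj_on (H (fst x)) {..<m (fst x)}"
      using H[OF \<open>fst x \<in> {1..k}\<close>] by (simp add: bij_betw_def)
    ultimately have "snd x = snd y" by (meson inj_onD)
    with f show ?thesis by (simp add: prod_eq_iff)
  qed
  have e_surj: "\<exists>x\<in>I. B = e x" if "B \<in> P" for B
  proof -
    have "card B \<in> n ` {1..k}" using cardP that by blast
    then obtain i where i: "i \<in> {1..k}" "card B = n i" by blast
    then have "B \<in> {B \<in> P. card B = n i}" using that by blast
    then have "B \<in> H i ` {..<m i}" using H[OF i(1)] by (simp add: bij_betw_def)
    then obtain a where a: "a < m i" "B = H i a" by blast
    have "(i,a) \<in> I" using i a by (simp add: I_def)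
    moreover have "B = e (i,a)" using a by (simp add: e_def)
    ultimately show ?thesis by blast
  qed
  have e_disj: "x = y" if "x \<in> I" "y \<in> I" "z \<in> e x" "z \<in> e y" for x y z
  proof -
    have "e x \<in> P" "e y \<in> P" using eP that by blast+
    moreover have "e x \<inter> e y \<noteq> {}" using that by blast
    ultimately have "e x = e y"
      using partition_onD2[OF part] by (meson disjointD)
    then show ?thesis using e_inj that by blast
  qed
  define Perm where "Perm = {\<pi> \<in> I \<rightarrow>\<^sub>E I. bij_betw \<pi> I I}"
  define S where "S \<pi> = {f \<in> X \<rightarrow>\<^sub>E X. \<forall>x\<in>I. f ` e (\<pi> x) \<subseteq> e x}" for \<pi>
  define W where "W \<pi> = (\<Prod>x\<in>I. n (fst x) ^ n (fst (\<pi> x)))" for \<pi> :: "nat \<times> nat \<Rightarrow> nat \<times> nat"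
  have finPerm: "finite Perm"
    by (rule finite_subset[of _ "I \<rightarrow>\<^sub>E I"]) (auto simp: Perm_def finI finite_PiE)
  have step1: "Sigma_part X P = \<Union> (S ` Perm)"
  proof
    show "Sigma_part X P \<subseteq> \<Union> (S ` Perm)"
    proof
      fix f assume f: "f \<in> Sigma_part X P"
      have fX: "f \<in> X \<rightarrow>\<^sub>E X" and fT: "\<forall>B\<in>P. \<exists>C\<in>P. f ` B \<subseteq> C"
        and fS: "\<forall>B\<in>P. f ` X \<inter> B \<noteq> {}"
        using f by (auto simp: Sigma_part_def T_part_def)
      have ex: "\<exists>x. x \<in> I \<and> f ` e y \<subseteq> e x" if "y \<in> I" for y
      proof -
        have "e y \<in> P" using eP[OF that] by (rule conjunct1)
        then obtain C where C: "C \<in> P" "f ` e y \<subseteq> C" using fT by blast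
        then show ?thesis using e_surj[OF C(1)] by blast
      qed
      have uniq: "x = x'" if yx: "y \<in> I" "x \<in> I" "x' \<in> I" "f ` e y \<subseteq> e x" "f ` e y \<subseteq> e x'"
        for x x' y
      proof -
        obtain z where "z \<in> e y" using e_ne[OF yx(1)] by blast
        then have "f z \<in> e x" "f z \<in> e x'" using yx by blast+
        then show ?thesis using e_disj yx(2,3) by blast
      qed
      define \<psi> where "\<psi> y = (THE x. x \<in> I \<and> f ` e y \<subseteq> e x)" for y
      have \<psi>: "\<psi> y \<in> I \<and> f ` e y \<subseteq> e (\<psi> y)" if yI: "y \<in> I" for y
        unfolding \<psi>_def
      proof (rule theI')
        obtain x where x: "x \<in> I" "f ` e y \<subseteq> e x" using ex[OF yI] by blast
        show "\<exists>!x. x \<in> I \<and> f ` e y \<subseteq> e x"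
        proof (rule ex1I[of _ x])
          show "x \<in> I \<and> f ` e y \<subseteq> e x" using x by (rule conjI)
          fix x' assume "x' \<in> I \<and> f ` e y \<subseteq> e x'"
          then show "x' = x" using uniq[OF yI x(1) _ x(2)] by blast
        qed
      qed
      have \<psi>surj: "\<psi> ` I = I"
      proof
        show "\<psi> ` I \<subseteq> I"
        proof
          fix u assume "u \<in> \<psi> ` I"
          then obtain y where "y \<in> I" "u = \<psi> y" by (rule imageE)
          then show "u \<in> I" using \<psi>[of y] by simp
        qed
        show "I \<subseteq> \<psi> ` I"
        proof
          fix x assume x: "x \<in> I"
          have "e x \<in> P" using eP[OF x] by (rule conjunct1)
          then obtain w where w: "w \<in> X" "f w \<in> e x" using fS by blast
          have "w \<in> \<Union> P" using w(1) partition_onD1[OF part] by blast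
          then obtain B where B: "B \<in> P" "w \<in> B" by blast
          then obtain y where y: "y \<in> I" "B = e y" using e_surj by blast
          have "f ` e y \<subseteq> e (\<psi> y)" "\<psi> y \<in> I" using \<psi>[OF y(1)] by simp_all
          then have "f w \<in> e (\<psi> y)" using B y(2) by blast
          then have "\<psi> y = x" using e_disj[OF \<open>\<psi> y \<in> I\<close> x _ w(2)] by blast
          then show "x \<in> \<psi> ` I" using y(1) by blast
        qed
      qed
      have \<psi>inj: "inj_on \<psi> I" using \<psi>surj finI by (simp add: eq_card_imp_inj_on)
      have \<psi>bij: "bij_betw \<psi> I I" by (simp add: bij_betw_def \<psi>inj \<psi>surj)
      define \<pi> where "\<pi> = restrict (inv_into I \<psi>) I"
      have ib: "bij_betw (inv_into I \<psi>) I I" using bij_betw_inv_into[OF \<psi>bij] .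
      have "bij_betw \<pi> I I"
        using ib by (rule bij_betw_cong[THEN iffD1, rotated]) (simp add: \<pi>_def)
      moreover have "\<pi> \<in> I \<rightarrow>\<^sub>E I" using ib unfolding \<pi>_def bij_betw_def by auto
      ultimately have pP: "\<pi> \<in> Perm" by (simp add: Perm_def)
      have "f \<in> S \<pi>"
        unfolding S_def
      proof (intro CollectI conjI ballI fX)
        fix x assume x: "x \<in> I"
        have px: "\<pi> x = inv_into I \<psi> x" using x by (simp add: \<pi>_def)
        have "\<psi> (\<pi> x) = x" using x \<psi>surj px by (simp add: f_inv_into_f)
        moreover have "\<pi> x \<in> I" using px x \<psi>surj by (metis inv_into_into)
        ultimately show "f ` e (\<pi> x) \<subseteq> e x" using \<psi> by metis
      qed
      then show "f \<in> \<Union> (S ` Perm)" using pP by blast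
    qed
    show "\<Union> (S ` Perm) \<subseteq> Sigma_part X P"
    proof
      fix f assume "f \<in> \<Union> (S ` Perm)"
      then obtain \<pi> where \<pi>: "\<pi> \<in> Perm" "f \<in> S \<pi>" by blast
      have fX: "f \<in> X \<rightarrow>\<^sub>E X" and fs: "\<forall>x\<in>I. f ` e (\<pi> x) \<subseteq> e x"
        using \<pi>(2) by (auto simp: S_def)
      have pI: "\<pi> ` I = I" using \<pi>(1) by (simp add: Perm_def bij_betw_def)
      have "\<exists>C\<in>P. f ` B \<subseteq> C" if B: "B \<in> P" for B
      proof -
        obtain y where y: "y \<in> I" "B = e y" using e_surj[OF B] by blast
        then obtain x where x: "x \<in> I" "y = \<pi> x" using pI by blast
        then have "f ` B \<subseteq> e x" using fs y by blast
        moreover have "e x \<in> P" using eP[OF x(1)] by (rule conjunct1)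
        ultimately show ?thesis by blast
      qed
      moreover have "f ` X \<inter> B \<noteq> {}" if B: "B \<in> P" for B
      proof -
        obtain x where x: "x \<in> I" "B = e x" using e_surj[OF B] by blast
        have "\<pi> x \<in> I" using x(1) pI by blast
        then obtain z where z: "z \<in> e (\<pi> x)" using e_ne by blast
        then have "z \<in> X" using e_sub \<open>\<pi> x \<in> I\<close> by blast
        moreover have "f z \<in> B" using z fs x by blast
        ultimately show ?thesis by blast
      qed
      ultimately show "f \<in> Sigma_part X P" using fX by (simp add: Sigma_part_def T_part_def)
    qed
  qed
  have step2: "card (S \<pi>) = W \<pi>" if pP: "\<pi> \<in> Perm" for \<pi>
  proof -
    have pE: "\<pi> \<in> I \<rightarrow>\<^sub>E I" and pb: "bij_betw \<pi> I I" using pP unfolding Perm_def by blast+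
    have pI: "\<pi> ` I = I" and pinj: "inj_on \<pi> I" using pb by (simp_all add: bij_betw_def)
    have pin: "\<pi> x \<in> I" if "x \<in> I" for x using pE that by (rule PiE_mem)
    have buniq: "x = x'" if u: "x \<in> I" "x' \<in> I" "z \<in> e (\<pi> x)" "z \<in> e (\<pi> x')" for x x' z
    proof -
      have "\<pi> x = \<pi> x'" by (rule e_disj[OF pin[OF u(1)] pin[OF u(2)] u(3) u(4)])
      then show ?thesis using pinj u(1,2) by (meson inj_onD)
    qed
    have bex: "\<exists>x. x \<in> I \<and> z \<in> e (\<pi> x)" if z: "z \<in> X" for z
    proof -
      have "z \<in> \<Union> P" using z partition_onD1[OF part] by blast
      then obtain B where B: "B \<in> P" "z \<in> B" by blast
      then obtain y where y: "y \<in> I" "B = e y" using e_surj by blast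
      then obtain x where x: "x \<in> I" "y = \<pi> x" using pI by blast
      then show ?thesis using B y by blast
    qed
    define blk where "blk z = (THE x. x \<in> I \<and> z \<in> e (\<pi> x))" for z
    have blk: "blk z \<in> I \<and> z \<in> e (\<pi> (blk z))" if z: "z \<in> X" for z
      unfolding blk_def
    proof (rule theI')
      obtain x where x: "x \<in> I" "z \<in> e (\<pi> x)" using bex[OF z] by blast
      show "\<exists>!x. x \<in> I \<and> z \<in> e (\<pi> x)"
      proof (rule ex1I[of _ x])
        show "x \<in> I \<and> z \<in> e (\<pi> x)" using x by (rule conjI)
        fix x' assume "x' \<in> I \<and> z \<in> e (\<pi> x')"
        then show "x' = x" using buniq[OF _ x(1) _ x(2)] by blast
      qed
    qed
    have blk_eq: "blk z = x" if u: "x \<in> I" "z \<in> e (\<pi> x)" for x z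
    proof -
      have "z \<in> X" using e_sub[OF pin[OF u(1)]] u(2) by blast
      then have "blk z \<in> I" "z \<in> e (\<pi> (blk z))" using blk by blast+
      then show ?thesis using buniq u by blast
    qed
    have SPi: "S \<pi> = PiE X (\<lambda>z. e (blk z))"
    proof
      show "S \<pi> \<subseteq> PiE X (\<lambda>z. e (blk z))"
      proof
        fix f assume f: "f \<in> S \<pi>"
        have fX: "f \<in> X \<rightarrow>\<^sub>E X" and fs: "\<forall>x\<in>I. f ` e (\<pi> x) \<subseteq> e x"
          using f unfolding S_def by blast+
        have "f z \<in> e (blk z)" if z: "z \<in> X" for z
        proof -
          have "blk z \<in> I" "z \<in> e (\<pi> (blk z))" using blk[OF z] by blast+
          then show ?thesis using fs by blast
        qed
        moreover have "f z = undefined" if "z \<notin> X" for z using fX that by (metis PiE_arb)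
        ultimately show "f \<in> PiE X (\<lambda>z. e (blk z))" by (auto simp: PiE_def Pi_def extensional_def)
      qed
      show "PiE X (\<lambda>z. e (blk z)) \<subseteq> S \<pi>"
      proof
        fix f assume f: "f \<in> PiE X (\<lambda>z. e (blk z))"
        have fz: "f z \<in> e (blk z)" if "z \<in> X" for z using f that by (rule PiE_mem)
        have "f z \<in> X" if z: "z \<in> X" for z
          using fz[OF z] e_sub blk[OF z] by blast
        moreover have "f z = undefined" if "z \<notin> X" for z using f that by (metis PiE_arb)
        ultimately have fX: "f \<in> X \<rightarrow>\<^sub>E X" by (auto simp: PiE_def Pi_def extensional_def)
        have "f ` e (\<pi> x) \<subseteq> e x" if x: "x \<in> I" for x
        proof
          fix u assume "u \<in> f ` e (\<pi> x)"
          then obtain z where z: "z \<in> e (\<pi> x)" "u = f z" by blast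
          have zX: "z \<in> X" using e_sub[OF pin[OF x]] z(1) by blast
          have "blk z = x" by (rule blk_eq[OF x z(1)])
          then show "u \<in> e x" using fz[OF zX] z(2) by simp
        qed
        then show "f \<in> S \<pi>" using fX unfolding S_def by blast
      qed
    qed
    have XU: "X = (\<Union>x\<in>I. e (\<pi> x))"
    proof
      show "X \<subseteq> (\<Union>x\<in>I. e (\<pi> x))" using blk by blast
      show "(\<Union>x\<in>I. e (\<pi> x)) \<subseteq> X" using e_sub pin by blast
    qed
    have "card (S \<pi>) = (\<Prod>z\<in>X. card (e (blk z)))"
      unfolding SPi by (rule card_PiE[OF X])
    also have "\<dots> = (\<Prod>x\<in>I. \<Prod>z\<in>e (\<pi> x). card (e (blk z)))"
      unfolding XU
    proof (rule prod.UNION_disjoint[OF finI])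
      show "\<forall>x\<in>I. finite (e (\<pi> x))" using e_sub pin X finite_subset by blast
      show "\<forall>x\<in>I. \<forall>y\<in>I. x \<noteq> y \<longrightarrow> e (\<pi> x) \<inter> e (\<pi> y) = {}" using buniq by blast
    qed
    also have "\<dots> = (\<Prod>x\<in>I. n (fst x) ^ n (fst (\<pi> x)))"
    proof (rule prod.cong[OF refl])
      fix x assume x: "x \<in> I"
      have "(\<Prod>z\<in>e (\<pi> x). card (e (blk z))) = (\<Prod>z\<in>e (\<pi> x). card (e x))"
        using blk_eq[OF x] by simp
      also have "\<dots> = card (e x) ^ card (e (\<pi> x))" by simp
      also have "\<dots> = n (fst x) ^ n (fst (\<pi> x))" using eP[OF x] eP[OF pin[OF x]] by simp
      finally show "(\<Prod>z\<in>e (\<pi> x). card (e (blk z))) = n (fst x) ^ n (fst (\<pi> x))" .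
    qed
    finally show ?thesis by (simp add: W_def)
  qed
  have step2b: "S \<pi> \<inter> S \<pi>' = {}" if pp: "\<pi> \<in> Perm" "\<pi>' \<in> Perm" "\<pi> \<noteq> \<pi>'" for \<pi> \<pi>'
  proof (rule ccontr)
    assume "S \<pi> \<inter> S \<pi>' \<noteq> {}"
    then obtain f where f: "f \<in> S \<pi>" "f \<in> S \<pi>'" by blast
    have fs: "\<forall>x\<in>I. f ` e (\<pi> x) \<subseteq> e x" "\<forall>x\<in>I. f ` e (\<pi>' x) \<subseteq> e x"
      using f by (auto simp: S_def)
    have "\<pi> x = \<pi>' x" for x
    proof (cases "x \<in> I")
      case True
      have "\<pi> \<in> I \<rightarrow>\<^sub>E I" using pp(1) unfolding Perm_def by blast
      then have "\<pi> x \<in> I" using True by (rule PiE_mem)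
      moreover have "\<pi>' ` I = I" using pp(2) by (simp add: Perm_def bij_betw_def)
      ultimately obtain y where y: "y \<in> I" "\<pi>' y = \<pi> x" by (metis imageE)
      obtain z where z: "z \<in> e (\<pi> x)" using e_ne[OF \<open>\<pi> x \<in> I\<close>] by blast
      have "f ` e (\<pi> x) \<subseteq> e x" using fs(1) True by blast
      then have 1: "f z \<in> e x" using z by blast
      have "f ` e (\<pi>' y) \<subseteq> e y" using fs(2) y(1) by blast
      moreover have "f z \<in> f ` e (\<pi>' y)" using z y(2) by simp
      ultimately have 2: "f z \<in> e y" by (rule subsetD)
      have "x = y" by (rule e_disj[OF True y(1) 1 2])
      then show ?thesis using y(2) by simp
    next
      case False
      have "\<pi> \<in> I \<rightarrow>\<^sub>E I" "\<pi>' \<in> I \<rightarrow>\<^sub>E I" using pp(1,2) unfolding Perm_def by blast+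
      then show ?thesis using False by (metis PiE_arb)
    qed
    then have "\<pi> = \<pi>'" by (rule ext)
    then show False using pp(3) by simp
  qed
  have step3: "card (Sigma_part X P) = (\<Sum>\<pi>\<in>Perm. W \<pi>)"
  proof -
    have "card (Sigma_part X P) = (\<Sum>\<pi>\<in>Perm. card (S \<pi>))"
      unfolding step1
    proof (rule card_UN_disjoint[OF finPerm])
      show "\<forall>\<pi>\<in>Perm. finite (S \<pi>)"
        using X by (auto simp: S_def intro: finite_subset[OF _ finite_PiE[OF X, of "\<lambda>_. X"]])
      show "\<forall>\<pi>\<in>Perm. \<forall>\<pi>'\<in>Perm. \<pi> \<noteq> \<pi>' \<longrightarrow> S \<pi> \<inter> S \<pi>' = {}" using step2b by blast
    qed
    then show ?thesis using step2 by simp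
  qed
  define d where "d x = n (fst x)" for x :: "nat \<times> nat"
  define Tm where "Tm \<pi> = (\<lambda>i. if i \<in> {1..k} then map (\<lambda>a. n (fst (\<pi> (i,a)))) [0..<m i] else [])"
    for \<pi> :: "nat \<times> nat \<Rightarrow> nat \<times> nat"
  define w where "w t = (\<Prod>i\<in>{1..k}. n i ^ sum_list (t i))" for t :: "nat \<Rightarrow> nat list"
  have sl: "sum_list (map g [0..<M]) = (\<Sum>a\<in>{..<M}. g a)" for g :: "nat \<Rightarrow> nat" and M
    by (simp add: sum_set_upt_conv_sum_list_nat[symmetric] lessThan_atLeast0)
  have WT: "W \<pi> = w (Tm \<pi>)" for \<pi>
  proof -
    have "W \<pi> = (\<Prod>i\<in>{1..k}. \<Prod>a\<in>{..<m i}. n i ^ n (fst (\<pi> (i,a))))"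
      unfolding W_def I_def by (subst prod.Sigma) (simp_all add: case_prod_beta)
    also have "\<dots> = (\<Prod>i\<in>{1..k}. n i ^ (\<Sum>a\<in>{..<m i}. n (fst (\<pi> (i,a)))))"
      by (simp add: power_sum)
    also have "\<dots> = w (Tm \<pi>)" unfolding w_def Tm_def by (intro prod.cong refl) (simp add: sl)
    finally show ?thesis .
  qed
  have dcard: "card {x\<in>I. d x = n j} = m j" if j: "j \<in> {1..k}" for j
  proof -
    have "{x\<in>I. d x = n j} = {j} \<times> {..<m j}"
    proof
      show "{x\<in>I. d x = n j} \<subseteq> {j} \<times> {..<m j}"
      proof
        fix x assume x: "x \<in> {x\<in>I. d x = n j}"
        then have "fst x \<in> {1..k}" "n (fst x) = n j" by (auto simp: I_def d_def)
        then have "fst x = j" using ninj j by (meson inj_onD)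
        then show "x \<in> {j} \<times> {..<m j}" using x by (auto simp: I_def)
      qed
      show "{j} \<times> {..<m j} \<subseteq> {x\<in>I. d x = n j}" using j by (auto simp: I_def d_def)
    qed
    then show ?thesis by simp
  qed
  have RHSms: "(\<Sum>j\<in>{1..k}. replicate_mset (m j) (n j)) = (\<Sum>i\<in>{1..k}. mset (map (\<lambda>a. d (i,a)) [0..<m i]))"
    by (intro sum.cong refl) (simp add: d_def map_replicate_const)
  have cntR: "count (\<Sum>j\<in>{1..k}. replicate_mset (m j) (n j)) v = card {x\<in>I. d x = v}" for v
    unfolding RHSms I_def by (rule count_sum_sigma) simp
  have Tin: "Tm \<pi> \<in> tuple_set k n m" if pP: "\<pi> \<in> Perm" for \<pi>
  proof -
    have pE: "\<pi> \<in> I \<rightarrow>\<^sub>E I" and pb: "bij_betw \<pi> I I" using pP unfolding Perm_def by blast+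
    have pI: "\<pi> ` I = I" and pinj: "inj_on \<pi> I" using pb by (simp_all add: bij_betw_def)
    have pin: "\<pi> x \<in> I" if "x \<in> I" for x using pE that by (rule PiE_mem)
    have 1: "\<forall>i\<in>{1..k}. length (Tm \<pi> i) = m i \<and> set (Tm \<pi> i) \<subseteq> n ` {1..k}"
    proof
      fix i assume i: "i \<in> {1..k}"
      have "fst (\<pi> (i,a)) \<in> {1..k}" if "a < m i" for a
        using pin[of "(i,a)"] i that by (auto simp: I_def)
      then show "length (Tm \<pi> i) = m i \<and> set (Tm \<pi> i) \<subseteq> n ` {1..k}"
        using i by (auto simp: Tm_def)
    qed
    have 2: "\<forall>i. i \<notin> {1..k} \<longrightarrow> Tm \<pi> i = []" by (simp add: Tm_def)
    have "(\<Sum>i\<in>{1..k}. mset (Tm \<pi> i)) = (\<Sum>i\<in>{1..k}. mset (map (\<lambda>a. (d \<circ> \<pi>) (i,a)) [0..<m i]))"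
      by (intro sum.cong refl) (simp add: Tm_def d_def)
    moreover have "count (\<Sum>i\<in>{1..k}. mset (map (\<lambda>a. (d \<circ> \<pi>) (i,a)) [0..<m i])) v = card {x\<in>I. d x = v}" for v
    proof -
      have "count (\<Sum>i\<in>{1..k}. mset (map (\<lambda>a. (d \<circ> \<pi>) (i,a)) [0..<m i])) v = card {x\<in>I. (d \<circ> \<pi>) x = v}"
        unfolding I_def by (rule count_sum_sigma) simp
      also have "\<dots> = card (\<pi> ` {x\<in>I. (d \<circ> \<pi>) x = v})"
        by (rule card_image[symmetric]) (rule inj_on_subset[OF pinj], blast)
      also have "\<pi> ` {x\<in>I. (d \<circ> \<pi>) x = v} = {x\<in>I. d x = v}"
      proof
        show "\<pi> ` {x\<in>I. (d \<circ> \<pi>) x = v} \<subseteq> {x\<in>I. d x = v}" using pin by auto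
        show "{x\<in>I. d x = v} \<subseteq> \<pi> ` {x\<in>I. (d \<circ> \<pi>) x = v}"
        proof
          fix y assume y: "y \<in> {x\<in>I. d x = v}"
          then obtain x where "x \<in> I" "y = \<pi> x" using pI by blast
          then show "y \<in> \<pi> ` {x\<in>I. (d \<circ> \<pi>) x = v}" using y by auto
        qed
      qed
      finally show ?thesis .
    qed
    ultimately have 3: "(\<Sum>i\<in>{1..k}. mset (Tm \<pi> i)) = (\<Sum>j\<in>{1..k}. replicate_mset (m j) (n j))"
      using cntR by (intro multiset_eqI) simp
    show ?thesis using 1 2 3 unfolding tuple_set_def by blast
  qed
  have fiber: "card {\<pi> \<in> Perm. Tm \<pi> = t} = (\<Prod>i\<in>{1..k}. fact (m i))" if t: "t \<in> tuple_set k n m" for t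
  proof -
    have tl: "length (t i) = m i" "set (t i) \<subseteq> n ` {1..k}" if "i \<in> {1..k}" for i
      using t that unfolding tuple_set_def by blast+
    have tout: "t i = []" if "i \<notin> {1..k}" for i using t that unfolding tuple_set_def by blast
    have tms: "(\<Sum>i\<in>{1..k}. mset (t i)) = (\<Sum>j\<in>{1..k}. replicate_mset (m j) (n j))"
      using t unfolding tuple_set_def by blast
    define c where "c x = t (fst x) ! snd x" for x :: "nat \<times> nat"
    have "(\<Sum>i\<in>{1..k}. mset (t i)) = (\<Sum>i\<in>{1..k}. mset (map (\<lambda>a. c (i,a)) [0..<m i]))"
    proof (intro sum.cong refl)
      fix i assume i: "i \<in> {1..k}"
      have "map (\<lambda>a. c (i,a)) [0..<m i] = map (nth (t i)) [0..<length (t i)]"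
        using tl[OF i] by (simp add: c_def)
      then show "mset (t i) = mset (map (\<lambda>a. c (i,a)) [0..<m i])" by (simp add: map_nth)
    qed
    then have ceq: "card {x\<in>I. c x = v} = card {x\<in>I. d x = v}" for v
      using tms cntR count_sum_sigma[of "{1..k}" c m v] unfolding I_def by simp
    have fib: "{\<pi> \<in> Perm. Tm \<pi> = t} = {\<pi> \<in> I \<rightarrow>\<^sub>E I. bij_betw \<pi> I I \<and> (\<forall>x\<in>I. d (\<pi> x) = c x)}"
    proof -
      have "Tm \<pi> = t \<longleftrightarrow> (\<forall>x\<in>I. d (\<pi> x) = c x)" for \<pi>
      proof
        assume T: "Tm \<pi> = t"
        show "\<forall>x\<in>I. d (\<pi> x) = c x"
        proof
          fix x assume x: "x \<in> I"
          then have i: "fst x \<in> {1..k}" "snd x < m (fst x)" by (auto simp: I_def)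
          have "t (fst x) = map (\<lambda>a. n (fst (\<pi> (fst x, a)))) [0..<m (fst x)]"
            using T i by (auto simp: Tm_def)
          then show "d (\<pi> x) = c x" using i by (simp add: c_def d_def)
        qed
      next
        assume C: "\<forall>x\<in>I. d (\<pi> x) = c x"
        show "Tm \<pi> = t"
        proof
          fix i show "Tm \<pi> i = t i"
          proof (cases "i \<in> {1..k}")
            case True
            show ?thesis
            proof (rule nth_equalityI)
              show "length (Tm \<pi> i) = length (t i)" using True tl by (simp add: Tm_def)
              fix a assume "a < length (Tm \<pi> i)"
              then have a: "a < m i" using True by (simp add: Tm_def)
              then have "(i,a) \<in> I" using True by (simp add: I_def)
              then have "d (\<pi> (i,a)) = c (i,a)" using C by blast
              then show "Tm \<pi> i ! a = t i ! a" using True a by (simp add: Tm_def c_def d_def)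
            qed
          next
            case False
            have "Tm \<pi> i = []" using False unfolding Tm_def by (simp only: if_False)
            then show ?thesis using tout[OF False] by simp
          qed
        qed
      qed
      then show ?thesis unfolding Perm_def by blast
    qed
    have "card {\<pi> \<in> Perm. Tm \<pi> = t} = (\<Prod>v\<in>c ` I. fact (card {x\<in>I. c x = v}))"
      unfolding fib by (rule core_count[OF finI ceq])
    also have "c ` I = d ` I"
    proof -
      have "v \<in> c ` I \<longleftrightarrow> v \<in> d ` I" for v
      proof -
        have "v \<in> c ` I \<longleftrightarrow> card {x\<in>I. c x = v} > 0" using finI by (auto simp: card_gt_0_iff)
        also have "\<dots> \<longleftrightarrow> card {x\<in>I. d x = v} > 0" using ceq by simp
        also have "\<dots> \<longleftrightarrow> v \<in> d ` I" using finI by (auto simp: card_gt_0_iff)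
        finally show ?thesis .
      qed
      then show ?thesis by blast
    qed
    also have "d ` I = n ` {1..k}"
    proof
      show "d ` I \<subseteq> n ` {1..k}" by (auto simp: d_def I_def)
      show "n ` {1..k} \<subseteq> d ` I"
      proof
        fix v assume "v \<in> n ` {1..k}"
        then obtain j where j: "j \<in> {1..k}" "v = n j" by blast
        then have "m j \<ge> 1" using pos by blast
        then have "(j,0) \<in> I" using j(1) by (simp add: I_def)
        then show "v \<in> d ` I" using j by (force simp: d_def)
      qed
    qed
    also have "(\<Prod>v\<in>n ` {1..k}. fact (card {x\<in>I. c x = v})) = (\<Prod>j\<in>{1..k}. fact (card {x\<in>I. c x = n j}))"
      using prod.reindex[OF ninj, of "\<lambda>v. fact (card {x\<in>I. c x = v})"] by (simp add: comp_def)
    also have "\<dots> = (\<Prod>j\<in>{1..k}. fact (m j))"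
      by (intro prod.cong refl) (simp add: ceq dcard)
    finally show ?thesis .
  qed
  have fin_ts: "finite (tuple_set k n m)" by (rule finite_tuple_set)
  have step4: "(\<Sum>\<pi>\<in>Perm. W \<pi>) = (\<Prod>i\<in>{1..k}. fact (m i)) *
    (\<Sum>t\<in>tuple_set k n m. \<Prod>i\<in>{1..k}. n i ^ sum_list (t i))"
  proof -
    have "(\<Sum>\<pi>\<in>Perm. W \<pi>) = (\<Sum>\<pi>\<in>Perm. w (Tm \<pi>))" using WT by simp
    also have "\<dots> = (\<Sum>t\<in>tuple_set k n m. \<Sum>\<pi>\<in>{\<pi>\<in>Perm. Tm \<pi> = t}. w (Tm \<pi>))"
      by (rule sum.group[symmetric, OF finPerm fin_ts]) (use Tin in blast)
    also have "\<dots> = (\<Sum>t\<in>tuple_set k n m. (\<Prod>i\<in>{1..k}. fact (m i)) * w t)"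
    proof (intro sum.cong refl)
      fix t assume t: "t \<in> tuple_set k n m"
      have "(\<Sum>\<pi>\<in>{\<pi>\<in>Perm. Tm \<pi> = t}. w (Tm \<pi>)) = (\<Sum>\<pi>\<in>{\<pi>\<in>Perm. Tm \<pi> = t}. w t)" by simp
      also have "\<dots> = card {\<pi>\<in>Perm. Tm \<pi> = t} * w t" by simp
      finally show "(\<Sum>\<pi>\<in>{\<pi>\<in>Perm. Tm \<pi> = t}. w (Tm \<pi>)) = (\<Prod>i\<in>{1..k}. fact (m i)) * w t"
        using fiber[OF t] by simp
    qed
    also have "\<dots> = (\<Prod>i\<in>{1..k}. fact (m i)) * (\<Sum>t\<in>tuple_set k n m. w t)"
      by (simp add: sum_distrib_left)
    finally show ?thesis by (simp add: w_def)
  qed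
  show ?thesis using step3 step4 by simp
qed

end
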